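(* Let $\phi=(\phi_1,\phi_2)^{\mathsf T}$ be the Hermite cubic splines $$\phi_1(x)=\begin{cases}(1-x)^2(1+2x),&x\in[0,1],\\(1+x)^2(1-2x),&x\in[-1,0),\\0,&\text{otherwise},\end{cases}\qquad \phi_2(x)=\begin{cases}(1-x)^2x,&x\in[0,1],\\(1+x)^2x,&x\in[-1,0),\\0,&\text{otherwise},\end{cases}$$ and let $\psi=(\psi_1,\psi_2)^{\mathsf T}$ with $\psi_\ell(x):=\phi_\ell(2x-1)$, $\ell=1,2$. Define $\mathring{\psi}:=\operatorname{diag}(\sqrt3/24,\,1/8)\,\psi''$ (second derivative taken piecewise, i.e. in the weak sense, which is a square-integrable function) and $\mathring{\phi}(x):=\big(\chi_{[0,1]}(x),\ \sqrt3(2x-1)\chi_{[0,1]}(x)\big)^{\mathsf T}$. Then the system $$\{\mathring{\phi}_\ell(\cdot-k): k\in\mathbb{Z},\ \ell=1,2\}\cup\{2^{j/2}\mathring{\psi}_\ell(2^j\cdot-k): j\ge 0,\ k\in\mathbb{Z},\ \ell=1,2\}$$ is an orthonormal basis of $L_2(\mathbb{R})$; that is, $\{\mathring{\phi};\mathring{\psi}\}$ is an orthogonal (multi)wavelet in $L_2(\mathbb{R})$.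
   Context: $\chi_{[0,1]}$ denotes the indicator function of $[0,1]$. *)

theory Defs
  imports "HOL-Analysis.Analysis"
begin

definition square_integrable :: "(real \<Rightarrow> real) \<Rightarrow> bool" where
  "square_integrable f \<longleftrightarrow> f \<in> borel_measurable lborel \<and> integrable lborel (\<lambda>x. (f x)^2)"

definition L2_inner :: "(real \<Rightarrow> real) \<Rightarrow> (real \<Rightarrow> real) \<Rightarrow> real" where
  "L2_inner f g = (LINT x|lborel. f x * g x)"

definition orthonormal_basis_L2 :: "'i set \<Rightarrow> ('i \<Rightarrow> real \<Rightarrow> real) \<Rightarrow> bool" where
  "orthonormal_basis_L2 I e \<longleftrightarrow>
     (\<forall>i\<in>I. square_integrable (e i)) \<and>
     (\<forall>i\<in>I. \<forall>j\<in>I. L2_inner (e i) (e j) = (if i = j then 1 else 0)) \<and>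
     (\<forall>f. square_integrable f \<longrightarrow>
        (\<forall>\<epsilon>>0. \<exists>F c. finite F \<and> F \<subseteq> I \<and>
           (LINT x|lborel. (f x - (\<Sum>i\<in>F. c i * e i x))^2) < \<epsilon>))"

definition hphi :: "nat \<Rightarrow> real \<Rightarrow> real" where
  "hphi l x =
     (if l = 1 then
        (if 0 \<le> x \<and> x \<le> 1 then (1 - x)^2 * (1 + 2*x)
         else if -1 \<le> x \<and> x < 0 then (1 + x)^2 * (1 - 2*x) else 0)
      else
        (if 0 \<le> x \<and> x \<le> 1 then (1 - x)^2 * x
         else if -1 \<le> x \<and> x < 0 then (1 + x)^2 * x else 0))"

definition hpsi :: "nat \<Rightarrow> real \<Rightarrow> real" where
  "hpsi l x = hphi l (2*x - 1)"

text \<open>psi-ring = diag(sqrt 3/24, 1/8) psi''; the second derivative is taken pointwise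
  (it exists except at the finitely many knots 0, 1/2, 1, a null set).\<close>
definition rpsi :: "nat \<Rightarrow> real \<Rightarrow> real" where
  "rpsi l x = (if l = 1 then sqrt 3 / 24 else 1/8) * deriv (deriv (hpsi l)) x"

definition rphi :: "nat \<Rightarrow> real \<Rightarrow> real" where
  "rphi l x = (if l = 1 then indicator {0..1} x else sqrt 3 * (2*x - 1) * indicator {0..1} x)"

definition wav_index :: "((nat \<times> int) + (nat \<times> int \<times> nat)) set" where
  "wav_index = {Inl (l, k) | l k. l \<in> {1,2}} \<union> {Inr (j, k, l) | j k l. l \<in> {1,2}}"

definition wav_system :: "((nat \<times> int) + (nat \<times> int \<times> nat)) \<Rightarrow> real \<Rightarrow> real" where
  "wav_system i x = (case i of
      Inl (l, k) \<Rightarrow> rphi l (x - real_of_int k)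
    | Inr (j, k, l) \<Rightarrow> 2 powr (real j / 2) * rpsi l (2^j * x - real_of_int k))"

end

theory Submission
  imports Defs
begin


lemma deriv_local:
  assumes "open S" "x \<in> S" "\<And>y. y \<in> S \<Longrightarrow> f y = g y"
  shows "deriv f x = deriv g x"
proof -
  have "eventually (\<lambda>y. f y = g y) (nhds x)"
    using assms by (auto simp: eventually_nhds)
  then show ?thesis by (rule deriv_cong_ev) simp
qed

lemma deriv2_local:
  assumes "open S" "x \<in> S" "\<And>y. y \<in> S \<Longrightarrow> f y = g y"
  shows "deriv (deriv f) x = deriv (deriv g) x"
  using assms by (intro deriv_local[of S]) (auto intro: deriv_local)

definition pw :: "nat \<Rightarrow> real \<Rightarrow> real" where
  "pw l y = (if l = 1 then (if 0 < y \<and> y < 1/2 then sqrt 3 * (1 - 4*y) else if 1/2 < y \<and> y < 1 then sqrt 3 * (4*y - 3) else 0)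
     else (if 0 < y \<and> y < 1/2 then 6*y - 1 else if 1/2 < y \<and> y < 1 then 6*y - 5 else 0))"

lemma deriv2_poly:
  assumes "\<And>y. (g has_real_derivative hA y) (at y)" "\<And>y. (hA has_real_derivative hB y) (at y)"
  shows "deriv (deriv g) x = hB x"
proof -
  have "deriv g = hA" using assms(1) by (auto intro!: ext DERIV_imp_deriv)
  then show ?thesis using assms(2) by (simp add: DERIV_imp_deriv)
qed

lemma rpsi_eq:
  assumes "y \<noteq> 0" "y \<noteq> 1/2" "y \<noteq> 1"
  shows "rpsi l y = pw l y"
proof -
  consider "y < 0" | "0 < y" "y < 1/2" | "1/2 < y" "y < 1" | "1 < y" using assms by linarith
  then show ?thesis
  proof cases
    case 1 note L = this
    have "deriv (deriv (hpsi l)) y = deriv (deriv (\<lambda>_. 0)) y"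
      by (rule deriv2_local[of "{..<0}"]) (use 1 in \<open>auto simp: hpsi_def hphi_def\<close>)
    then show ?thesis using 1 by (simp add: rpsi_def pw_def)
  next
    case 4 note L = this
    have "deriv (deriv (hpsi l)) y = deriv (deriv (\<lambda>_. 0)) y"
      by (rule deriv2_local[of "{1<..}"]) (use 4 in \<open>auto simp: hpsi_def hphi_def\<close>)
    then show ?thesis using 4 by (simp add: rpsi_def pw_def)
  next
    case 2
    show ?thesis
    proof (cases "l = 1")
      case True
      have "deriv (deriv (hpsi l)) y = deriv (deriv (\<lambda>x. 12*x^2 - 16*x^3)) y"
        by (rule deriv2_local[of "{0<..<1/2}"]) (use 2 True in \<open>auto simp: hpsi_def hphi_def power2_eq_square power3_eq_cube algebra_simps\<close>)
      also have "\<dots> = 24 - 96 * y"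
        by (rule deriv2_poly[where hA = "\<lambda>x. 24*x - 48*x^2"]) (auto intro!: derivative_eq_intros simp: power2_eq_square)
      finally have d: "deriv (deriv (hpsi l)) y = 24 - 96 * y" .
      have "rpsi l y = sqrt 3 / 24 * (24 - 96 * y)" using True d by (simp add: rpsi_def)
      then show ?thesis using 2 True by (simp add: pw_def algebra_simps)
    next
      case False
      have "deriv (deriv (hpsi l)) y = deriv (deriv (\<lambda>x. 8*x^3 - 4*x^2)) y"
        by (rule deriv2_local[of "{0<..<1/2}"]) (use 2 False in \<open>auto simp: hpsi_def hphi_def power2_eq_square power3_eq_cube algebra_simps\<close>)
      also have "\<dots> = 48*y - 8"
        by (rule deriv2_poly[where hA = "\<lambda>x. 24*x^2 - 8*x"]) (auto intro!: derivative_eq_intros simp: power2_eq_square)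
      finally have d: "deriv (deriv (hpsi l)) y = 48*y - 8" .
      have "rpsi l y = 1/8 * (48*y - 8)" using False d by (simp add: rpsi_def)
      then show ?thesis using 2 False by (simp add: pw_def algebra_simps)
    qed
  next
    case 3
    show ?thesis
    proof (cases "l = 1")
      case True
      have "deriv (deriv (hpsi l)) y = deriv (deriv (\<lambda>x. 4*(1-x)^2*(4*x-1))) y"
        by (rule deriv2_local[of "{1/2<..<1}"]) (use 3 True in \<open>auto simp: hpsi_def hphi_def power2_eq_square power3_eq_cube algebra_simps\<close>)
      also have "\<dots> = 96 * y - 72"
        by (rule deriv2_poly[where hA = "\<lambda>x. 4*(-2*(1-x)*(4*x-1) + 4*(1-x)^2)"]) (auto intro!: derivative_eq_intros simp: power2_eq_square algebra_simps)
      finally have d: "deriv (deriv (hpsi l)) y = 96 * y - 72" .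
      have "rpsi l y = sqrt 3 / 24 * (96 * y - 72)" using True d by (simp add: rpsi_def)
      then show ?thesis using 3 True by (simp add: pw_def algebra_simps)
    next
      case False
      have "deriv (deriv (hpsi l)) y = deriv (deriv (\<lambda>x. 4*(1-x)^2*(2*x-1))) y"
        by (rule deriv2_local[of "{1/2<..<1}"]) (use 3 False in \<open>auto simp: hpsi_def hphi_def power2_eq_square power3_eq_cube algebra_simps\<close>)
      also have "\<dots> = 48*y - 40"
        by (rule deriv2_poly[where hA = "\<lambda>x. 4*(-2*(1-x)*(2*x-1) + 2*(1-x)^2)"]) (auto intro!: derivative_eq_intros simp: power2_eq_square algebra_simps)
      finally have d: "deriv (deriv (hpsi l)) y = 48*y - 40" .
      have "rpsi l y = 1/8 * (48*y - 40)" using False d by (simp add: rpsi_def)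
      then show ?thesis using 3 False by (simp add: pw_def algebra_simps)
    qed
  qed
qed


lemma pw_measurable[measurable]: "pw l \<in> borel_measurable borel"
  unfolding pw_def by measurable

lemma rpsi_measurable[measurable]: "rpsi l \<in> borel_measurable borel"
proof (rule measurable_discrete_difference[where X="{0,1/2,1}", OF pw_measurable])
  show "\<And>x. x \<in> space borel \<Longrightarrow> x \<notin> {0, 1 / 2, 1} \<Longrightarrow> pw l x = rpsi l x"
    using rpsi_eq by auto
qed auto

lemma rphi_measurable[measurable]: "rphi l \<in> borel_measurable borel"
  unfolding rphi_def by measurable

lemma rpsi_out: "t < 0 \<or> 1 < t \<Longrightarrow> rpsi l t = 0"
  by (subst rpsi_eq) (auto simp: pw_def)

lemma quad_int:
  fixes u v c0 c1 c2 :: real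
  assumes "u \<le> v"
  shows "(LINT y|lborel. (c0 + c1*y + c2*y^2) * indicator {u..v} y) = c0*(v-u) + c1*(v^2-u^2)/2 + c2*(v^3-u^3)/3"
proof -
  have "(LINT y|lborel. (c0 + c1*y + c2*y^2) * indicator {u..v} y) =
     (\<lambda>y. c0*y + c1*y^2/2 + c2*y^3/3) v - (\<lambda>y. c0*y + c1*y^2/2 + c2*y^3/3) u"
    by (rule integral_FTC_Icc_real[OF assms]) (auto intro!: derivative_eq_intros simp: power2_eq_square power3_eq_cube algebra_simps)
  also have "\<dots> = c0*(v-u) + c1*(v^2-u^2)/2 + c2*(v^3-u^3)/3" by (simp add: field_simps)
  finally show ?thesis .
qed

lemma master_int:
  fixes h :: "real \<Rightarrow> real" and c0 c1 c2 d0 d1 d2 :: real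
  assumes h1: "\<And>y. 0 < y \<Longrightarrow> y < 1/2 \<Longrightarrow> h y = c0 + c1*y + c2*y^2"
    and h2: "\<And>y. 1/2 < y \<Longrightarrow> y < 1 \<Longrightarrow> h y = d0 + d1*y + d2*y^2"
    and h3: "\<And>y. y < 0 \<or> 1 < y \<Longrightarrow> h y = 0"
  shows "(LINT y|lborel. h y) = (c0/2 + c1/8 + c2/24) + (d0/2 + d1*3/8 + d2*7/24)"
    and "integrable lborel h"
proof -
  define g where "g y = (c0 + c1*y + c2*y^2) * indicator {0..1/2} y + (d0 + d1*y + d2*y^2) * indicator {1/2..1} y" for y :: real
  have gm: "g \<in> borel_measurable borel" unfolding g_def by measurable
  have eq: "g y = h y" if "y \<notin> {0,1/2,1}" for y
  proof -
    have "y \<noteq> 0" "y \<noteq> 1/2" "y \<noteq> 1" using that by auto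
    then consider "y < 0" | "0 < y" "y < 1/2" | "1/2 < y" "y < 1" | "1 < y" by linarith
    then show ?thesis by cases (auto simp: g_def h1 h2 h3 indicator_def)
  qed
  have hm: "h \<in> borel_measurable borel"
    by (rule measurable_discrete_difference[where X="{0,1/2,1}", OF gm]) (use eq in auto)
  have ae: "AE y in lborel. h y = g y"
    using AE_lborel_singleton[of 0] AE_lborel_singleton[of "1/2"] AE_lborel_singleton[of 1]
    by eventually_elim (use eq in auto)
  have i1: "integrable lborel (\<lambda>y. (c0 + c1*y + c2*y^2) * indicator {0..1/2} y)"
    by (rule borel_integrable_atLeastAtMost) auto
  have i2: "integrable lborel (\<lambda>y. (d0 + d1*y + d2*y^2) * indicator {1/2..1} y)"
    by (rule borel_integrable_atLeastAtMost) auto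
  have ig: "integrable lborel g" unfolding g_def using i1 i2 by (rule Bochner_Integration.integrable_add)
  show "integrable lborel h"
    using ig ae hm by (subst integrable_cong_AE[where g=g]) auto
  have "(LINT y|lborel. h y) = (LINT y|lborel. g y)"
    using ae hm gm by (intro integral_cong_AE) auto
  also have "\<dots> = (LINT y|lborel. (c0 + c1*y + c2*y^2) * indicator {0..1/2} y) + (LINT y|lborel. (d0 + d1*y + d2*y^2) * indicator {1/2..1} y)"
    unfolding g_def using i1 i2 by (rule Bochner_Integration.integral_add)
  also have "\<dots> = (c0/2 + c1/8 + c2/24) + (d0/2 + d1*3/8 + d2*7/24)"
    apply (subst quad_int, simp)+
    by (simp add: power2_eq_square power3_eq_cube)
  finally show "(LINT y|lborel. h y) = (c0/2 + c1/8 + c2/24) + (d0/2 + d1*3/8 + d2*7/24)" .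
qed


lemma rpsi_l: "0 < y \<Longrightarrow> y < 1/2 \<Longrightarrow> rpsi l y = (if l = 1 then sqrt 3 * (1 - 4*y) else 6*y - 1)"
  by (subst rpsi_eq) (auto simp: pw_def)
lemma rpsi_r: "1/2 < y \<Longrightarrow> y < 1 \<Longrightarrow> rpsi l y = (if l = 1 then sqrt 3 * (4*y - 3) else 6*y - 5)"
  by (subst rpsi_eq) (auto simp: pw_def)


lemma rpsi1_l: "0 < y \<Longrightarrow> y < 1/2 \<Longrightarrow> rpsi 1 y = sqrt 3 * (1 - 4*y)"
  by (subst rpsi_l) auto
lemma rpsi2_l: "l \<noteq> 1 \<Longrightarrow> 0 < y \<Longrightarrow> y < 1/2 \<Longrightarrow> rpsi l y = 6*y - 1"
  by (subst rpsi_l) auto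
lemma rpsi1_r: "1/2 < y \<Longrightarrow> y < 1 \<Longrightarrow> rpsi 1 y = sqrt 3 * (4*y - 3)"
  by (subst rpsi_r) auto
lemma rpsi2_r: "l \<noteq> 1 \<Longrightarrow> 1/2 < y \<Longrightarrow> y < 1 \<Longrightarrow> rpsi l y = 6*y - 5"
  by (subst rpsi_r) auto
lemma rphi1: "0 \<le> y \<Longrightarrow> y \<le> 1 \<Longrightarrow> rphi 1 y = 1"
  by (simp add: rphi_def)
lemma rphi2: "l \<noteq> 1 \<Longrightarrow> 0 \<le> y \<Longrightarrow> y \<le> 1 \<Longrightarrow> rphi l y = sqrt 3 * (2*y - 1)"
  by (simp add: rphi_def)
lemma rphi_out: "y < 0 \<or> 1 < y \<Longrightarrow> rphi l y = 0"
  by (auto simp add: rphi_def)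


lemmas rpsi1_l' = rpsi1_l[unfolded One_nat_def]
lemmas rpsi1_r' = rpsi1_r[unfolded One_nat_def]
lemmas rphi1' = rphi1[unfolded One_nat_def]
lemmas rpsi2_l' = rpsi2_l[unfolded One_nat_def]
lemmas rpsi2_r' = rpsi2_r[unfolded One_nat_def]
lemmas rphi2' = rphi2[unfolded One_nat_def]




lemma K_rpsi_aff:
  fixes a b :: real
  assumes B: "\<And>y. 0 < y \<Longrightarrow> y < 1 \<Longrightarrow> B y = a*y+b"
  shows "(LINT y|lborel. rpsi l y * B y) = 0"
proof (cases "l = 1")
  case True note L = this
  have "(LINT y|lborel. rpsi l y * B y) = (sqrt 3*b/2 + sqrt 3*(a-4*b)/8 + (-4* sqrt 3*a)/24) + (-3* sqrt 3*b/2 + sqrt 3*(4*b-3*a)*3/8 + 4* sqrt 3*a*7/24)"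
    by (rule master_int) ((auto simp: rpsi1_l rpsi2_l rpsi1_r rpsi2_r rpsi1_l' rpsi1_r' rpsi2_l' rpsi2_r' rpsi_out B L)[1]; simp add: algebra_simps power2_eq_square)+
  then show ?thesis by (simp add: field_simps)
next
  case False note L = this
  have "(LINT y|lborel. rpsi l y * B y) = (-b/2 + (6*b-a)/8 + 6*a/24) + (-5*b/2 + (6*b-5*a)*3/8 + 6*a*7/24)"
    by (rule master_int) ((auto simp: rpsi2_l[OF L] rpsi2_r[OF L] rpsi_out B)[1]; simp add: algebra_simps power2_eq_square)+
  then show ?thesis by (simp add: field_simps)
qed

lemma K_rpsi_rpsi:
  "(LINT y|lborel. rpsi l y * rpsi l' y) = (if (l = 1) = (l' = 1) then 1 else 0)"
proof -
  have s3: "sqrt 3 * sqrt 3 = (3::real)" by simp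
  consider "l = 1" "l' = 1" | "l = 1" "l' \<noteq> 1" | "l \<noteq> 1" "l' = 1" | "l \<noteq> 1" "l' \<noteq> 1" by blast
  then show ?thesis
  proof cases
    case 1 note L = this
    have "(LINT y|lborel. rpsi l y * rpsi l' y) = (3/2 + (-24)/8 + 48/24) + (27/2 + (-72)*3/8 + 48*7/24)"
      by (rule master_int) ((auto simp: rpsi1_l rpsi2_l rpsi1_r rpsi2_r rpsi1_l' rpsi1_r' rpsi2_l' rpsi2_r' rpsi_out L)[1]; simp add: algebra_simps power2_eq_square s3)+
    then show ?thesis using 1 by simp
  next
    case 2 note L = this
    have "(LINT y|lborel. rpsi l y * rpsi l' y) = (-sqrt 3/2 + 10* sqrt 3/8 + (-24* sqrt 3)/24) + (15* sqrt 3/2 + (-38* sqrt 3)*3/8 + 24* sqrt 3*7/24)"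
      by (rule master_int) ((auto simp: rpsi1_l rpsi1_r rpsi1_l' rpsi1_r' rpsi2_l[OF L(2)] rpsi2_r[OF L(2)] rpsi_out L(1))[1]; simp add: algebra_simps power2_eq_square)+
    then show ?thesis using 2 by (simp add: field_simps)
  next
    case 3 note L = this
    have "(LINT y|lborel. rpsi l y * rpsi l' y) = (-sqrt 3/2 + 10* sqrt 3/8 + (-24* sqrt 3)/24) + (15* sqrt 3/2 + (-38* sqrt 3)*3/8 + 24* sqrt 3*7/24)"
      by (rule master_int) ((auto simp: rpsi1_l rpsi1_r rpsi1_l' rpsi1_r' rpsi2_l[OF L(1)] rpsi2_r[OF L(1)] rpsi_out L(2))[1]; simp add: algebra_simps power2_eq_square)+
    then show ?thesis using 3 by (simp add: field_simps)
  next
    case 4 note L = this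
    have "(LINT y|lborel. rpsi l y * rpsi l' y) = (1/2 + (-12)/8 + 36/24) + (25/2 + (-60)*3/8 + 36*7/24)"
      by (rule master_int) ((auto simp: rpsi2_l[OF L(1)] rpsi2_r[OF L(1)] rpsi2_l[OF L(2)] rpsi2_r[OF L(2)] rpsi_out)[1]; simp add: algebra_simps power2_eq_square)+
    then show ?thesis using 4 by simp
  qed
qed

lemma K_rphi_aff:
  fixes a b :: real
  assumes B: "\<And>y. 0 < y \<Longrightarrow> y < 1 \<Longrightarrow> B y = a*y+b"
  shows "(LINT y|lborel. rphi l y * B y) = (if l = 1 then a/2 + b else sqrt 3 * a / 6)"
proof (cases "l = 1")
  case True note L = this
  have "(LINT y|lborel. rphi l y * B y) = (b/2 + a/8 + 0/24) + (b/2 + a*3/8 + 0*7/24)"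
    by (rule master_int) ((auto simp: rphi1 rphi1' rphi2 rphi2' rphi_out B L)[1]; simp add: algebra_simps)+
  then show ?thesis using True by simp
next
  case False note L = this
  have "(LINT y|lborel. rphi l y * B y) = (-sqrt 3*b/2 + sqrt 3*(2*b-a)/8 + 2* sqrt 3*a/24) + (-sqrt 3*b/2 + sqrt 3*(2*b-a)*3/8 + 2* sqrt 3*a*7/24)"
    by (rule master_int) ((auto simp: rphi2[OF L] rphi_out B)[1]; simp add: algebra_simps power2_eq_square)+
  then show ?thesis using False by (simp add: field_simps)
qed




lemma int_lt_pow_real:
  fixes m :: int
  assumes "m < 2^j"
  shows "real_of_int m + 1 \<le> 2^j"
proof -
  have "m + 1 \<le> 2^j" using assms by simp
  then have "real_of_int (m + 1) \<le> real_of_int (2^j)" by (simp only: of_int_le_iff)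
  then show ?thesis by simp
qed

lemma int_ge_pow_real:
  fixes m :: int
  assumes "2^j \<le> m"
  shows "2^j \<le> real_of_int m"
proof -
  have "real_of_int (2^j) \<le> real_of_int m" using assms by (simp only: of_int_le_iff)
  then show ?thesis by simp
qed

lemma int_neg_real:
  fixes m :: int
  assumes "m < 0"
  shows "real_of_int m \<le> -1"
  using assms by simp

lemma rphi_local:
  fixes m :: int
  shows "\<exists>a b. \<forall>y. 0 < y \<and> y < 1 \<longrightarrow> rphi l ((real_of_int m + y) / 2^j) = a*y+b"
proof (cases "0 \<le> m \<and> m < 2^j")
  case True
  then have m1: "real_of_int m + 1 \<le> 2^j" and m0: "0 \<le> real_of_int m" using int_lt_pow_real by auto
  have t01: "0 \<le> (real_of_int m + y) / 2^j \<and> (real_of_int m + y) / 2^j \<le> 1" if "0 < y" "y < 1" for y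
    using that m1 m0 by (auto simp: field_simps)
  show ?thesis
  proof (cases "l = 1")
    case True
    show ?thesis by (rule exI[of _ 0], rule exI[of _ 1]) (use t01 True in \<open>auto simp: rphi_def\<close>)
  next
    case False
    show ?thesis
      by (rule exI[of _ "2 * sqrt 3 / 2^j"], rule exI[of _ "sqrt 3 * (2 * real_of_int m / 2^j - 1)"])
         (use t01 in \<open>auto simp: rphi2[OF False] field_simps\<close>)
  qed
next
  case False
  have "rphi l ((real_of_int m + y) / 2^j) = 0" if "0 < y" "y < 1" for y
  proof (rule rphi_out)
    show "(real_of_int m + y) / 2 ^ j < 0 \<or> 1 < (real_of_int m + y) / 2 ^ j"
    proof (cases "m < 0")
      case True
      then show ?thesis using int_neg_real[OF True] that by (auto simp: field_simps)
    next
      case F: False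
      then have "2^j \<le> m" using False by auto
      from int_ge_pow_real[OF this] have "2^j < real_of_int m + y" using that by linarith
      then show ?thesis by (auto simp: field_simps)
    qed
  qed
  then show ?thesis by (intro exI[of _ 0]) auto
qed

lemma rpsi_local:
  fixes m :: int
  assumes "d \<ge> 1"
  shows "\<exists>a b. \<forall>y. 0 < y \<and> y < 1 \<longrightarrow> rpsi l ((real_of_int m + y) / 2^d) = a*y+b"
proof -
  obtain e where d: "d = Suc e" using assms by (cases d) auto
  have pd: "(2::real)^d = 2 * 2^e" using d by simp
  consider "m < 0 \<or> 2^d \<le> m" | "0 \<le> m" "m < 2^e" | "2^e \<le> m" "m < 2^d" by force
  then show ?thesis
  proof cases
    case 1
    have "rpsi l ((real_of_int m + y) / 2^d) = 0" if "0 < y" "y < 1" for y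
    proof (rule rpsi_out)
      show "(real_of_int m + y) / 2 ^ d < 0 \<or> 1 < (real_of_int m + y) / 2 ^ d"
      proof (cases "m < 0")
        case True
        then show ?thesis using int_neg_real[OF True] that by (auto simp: field_simps)
      next
        case F: False
        then have "2^d \<le> m" using 1 by auto
        from int_ge_pow_real[OF this] have "2^d < real_of_int m + y" using that by linarith
        then show ?thesis by (auto simp: field_simps)
      qed
    qed
    then show ?thesis by (intro exI[of _ 0]) auto
  next
    case 2
    then have m1: "real_of_int m + 1 \<le> 2^e" and m0: "0 \<le> real_of_int m" using int_lt_pow_real by auto
    have t: "0 < (real_of_int m + y) / 2^d \<and> (real_of_int m + y) / 2^d < 1/2" if "0 < y" "y < 1" for y
      using that m1 m0 unfolding pd by (auto simp: field_simps)
    show ?thesis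
    proof (cases "l = 1")
      case True
      show ?thesis
      proof (rule exI[of _ "- 4 * sqrt 3 / 2^d"], rule exI[of _ "sqrt 3 * (1 - 4 * real_of_int m / 2^d)"], intro allI impI)
        fix y :: real assume "0 < y \<and> y < 1"
        then have tt: "0 < (real_of_int m + y) / 2^d" "(real_of_int m + y) / 2^d < 1/2" using t by auto
        have "rpsi l ((real_of_int m + y) / 2^d) = sqrt 3 * (1 - 4 * ((real_of_int m + y) / 2^d))"
          unfolding True by (rule rpsi1_l[OF tt])
        also have "\<dots> = - 4 * sqrt 3 / 2^d * y + sqrt 3 * (1 - 4 * real_of_int m / 2^d)"
          by (simp add: field_simps)
        finally show "rpsi l ((real_of_int m + y) / 2^d) = - 4 * sqrt 3 / 2^d * y + sqrt 3 * (1 - 4 * real_of_int m / 2^d)" .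
      qed
    next
      case False
      show ?thesis
        by (rule exI[of _ "6 / 2^d"], rule exI[of _ "6 * real_of_int m / 2^d - 1"])
           (use t in \<open>auto simp: rpsi2_l[OF False] field_simps\<close>)
    qed
  next
    case 3
    then have m1: "real_of_int m + 1 \<le> 2^d" and m0: "2^e \<le> real_of_int m" using int_lt_pow_real int_ge_pow_real by auto
    have t: "1/2 < (real_of_int m + y) / 2^d \<and> (real_of_int m + y) / 2^d < 1" if "0 < y" "y < 1" for y
    proof -
      have a1: "2^e < real_of_int m + y" using m0 that by linarith
      have a2: "real_of_int m + y < 2^d" using m1 that by linarith
      show ?thesis using a1 a2 unfolding pd by (simp add: field_simps)
    qed
    show ?thesis
    proof (cases "l = 1")
      case True
      show ?thesis
      proof (rule exI[of _ "4 * sqrt 3 / 2^d"], rule exI[of _ "sqrt 3 * (4 * real_of_int m / 2^d - 3)"], intro allI impI)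
        fix y :: real assume "0 < y \<and> y < 1"
        then have tt: "1/2 < (real_of_int m + y) / 2^d" "(real_of_int m + y) / 2^d < 1" using t by auto
        have "rpsi l ((real_of_int m + y) / 2^d) = sqrt 3 * (4 * ((real_of_int m + y) / 2^d) - 3)"
          unfolding True by (rule rpsi1_r[OF tt])
        also have "\<dots> = 4 * sqrt 3 / 2^d * y + sqrt 3 * (4 * real_of_int m / 2^d - 3)"
          by (simp add: field_simps)
        finally show "rpsi l ((real_of_int m + y) / 2^d) = 4 * sqrt 3 / 2^d * y + sqrt 3 * (4 * real_of_int m / 2^d - 3)" .
      qed
    next
      case False
      show ?thesis
        by (rule exI[of _ "6 / 2^d"], rule exI[of _ "6 * real_of_int m / 2^d - 5"])
           (use t in \<open>auto simp: rpsi2_r[OF False] field_simps\<close>)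
    qed
  qed
qed




lemma subst_Inr:
  fixes g :: "real \<Rightarrow> real"
  shows "(LINT x|lborel. (2 powr (real j / 2) * rpsi l (2^j * x - real_of_int k)) * g x) =
    2 powr (real j / 2) / 2^j * (LINT y|lborel. rpsi l y * g ((real_of_int k + y) / 2^j))"
proof -
  have c: "(1/2^j::real) \<noteq> 0" by simp
  have e1: "2^j * (real_of_int k / 2^j + 1/2^j * y) - real_of_int k = y" for y :: real
    by (simp add: field_simps)
  have e2: "real_of_int k / 2^j + 1/2^j * y = (real_of_int k + y) / 2^j" for y :: real
    by (simp add: field_simps)
  have "(LINT x|lborel. (2 powr (real j / 2) * rpsi l (2^j * x - real_of_int k)) * g x) =
     \<bar>1/2^j\<bar> *\<^sub>R (LINT y|lborel. (2 powr (real j / 2) * rpsi l (2^j * (real_of_int k / 2^j + 1/2^j * y) - real_of_int k)) * g (real_of_int k / 2^j + 1/2^j * y))"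
    by (rule lborel_integral_real_affine[OF c])
  also have "\<dots> = 1/2^j * (LINT y|lborel. 2 powr (real j / 2) * (rpsi l y * g ((real_of_int k + y) / 2^j)))"
    by (simp only: e1 e2 mult.assoc) simp
  also have "\<dots> = 2 powr (real j / 2) / 2^j * (LINT y|lborel. rpsi l y * g ((real_of_int k + y) / 2^j))"
    by simp
  finally show ?thesis .
qed

lemma subst_Inl:
  fixes g :: "real \<Rightarrow> real"
  shows "(LINT x|lborel. rphi l (x - real_of_int k) * g x) = (LINT y|lborel. rphi l y * g (real_of_int k + y))"
proof -
  have c: "(1::real) \<noteq> 0" by simp
  have "(LINT x|lborel. rphi l (x - real_of_int k) * g x) = \<bar>1\<bar> *\<^sub>R (LINT y|lborel. rphi l (real_of_int k + 1 * y - real_of_int k) * g (real_of_int k + 1 * y))"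
    by (rule lborel_integral_real_affine[OF c])
  then show ?thesis by simp
qed

lemma wav_Inl: "wav_system (Inl (l, k)) x = rphi l (x - real_of_int k)"
  by (simp add: wav_system_def)
lemma wav_Inr: "wav_system (Inr (j, k, l)) x = 2 powr (real j / 2) * rpsi l (2^j * x - real_of_int k)"
  by (simp add: wav_system_def)

lemma L2_inner_sym: "L2_inner f g = L2_inner g f"
  by (simp add: L2_inner_def mult.commute)

lemma ip_Inr_Inl: "L2_inner (wav_system (Inr (j, k, l))) (wav_system (Inl (l', k'))) = 0"
proof -
  obtain a b where ab: "\<forall>y. 0 < y \<and> y < 1 \<longrightarrow> rphi l' ((real_of_int (k - k' * 2^j) + y) / 2^j) = a*y+b"
    using rphi_local by blast
  have arg: "(real_of_int k + y) / 2^j - real_of_int k' = (real_of_int (k - k' * 2^j) + y) / 2^j" for y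
    by (simp add: field_simps)
  have "L2_inner (wav_system (Inr (j, k, l))) (wav_system (Inl (l', k'))) =
     2 powr (real j / 2) / 2^j * (LINT y|lborel. rpsi l y * rphi l' ((real_of_int k + y) / 2^j - real_of_int k'))"
    unfolding L2_inner_def wav_Inl wav_Inr by (rule subst_Inr)
  also have "(LINT y|lborel. rpsi l y * rphi l' ((real_of_int k + y) / 2^j - real_of_int k')) = 0"
    by (rule K_rpsi_aff[of _ a b]) (use ab in \<open>auto simp: arg\<close>)
  finally show ?thesis by simp
qed

lemma ip_Inr_Inr_lt:
  assumes "j' < j"
  shows "L2_inner (wav_system (Inr (j, k, l))) (wav_system (Inr (j', k', l'))) = 0"
proof -
  define d where "d = j - j'"
  have d1: "d \<ge> 1" and jj: "j = j' + d" using assms by (auto simp: d_def)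
  obtain a b where ab: "\<forall>y. 0 < y \<and> y < 1 \<longrightarrow> rpsi l' ((real_of_int (k - k' * 2^d) + y) / 2^d) = a*y+b"
    using rpsi_local[OF d1] by blast
  have arg: "2^j' * ((real_of_int k + y) / 2^j) - real_of_int k' = (real_of_int (k - k' * 2^d) + y) / 2^d" for y
    unfolding jj by (simp add: field_simps power_add)
  have "L2_inner (wav_system (Inr (j, k, l))) (wav_system (Inr (j', k', l'))) =
     2 powr (real j / 2) / 2^j * (LINT y|lborel. rpsi l y * (2 powr (real j' / 2) * rpsi l' (2^j' * ((real_of_int k + y) / 2^j) - real_of_int k')))"
    unfolding L2_inner_def wav_Inr by (rule subst_Inr)
  also have "(LINT y|lborel. rpsi l y * (2 powr (real j' / 2) * rpsi l' (2^j' * ((real_of_int k + y) / 2^j) - real_of_int k'))) = 0"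
  proof (rule K_rpsi_aff[of _ "2 powr (real j' / 2) * a" "2 powr (real j' / 2) * b"])
    fix y :: real assume y: "0 < y" "y < 1"
    have "rpsi l' (2^j' * ((real_of_int k + y) / 2^j) - real_of_int k') = a*y+b"
      unfolding arg using ab y by blast
    then show "2 powr (real j' / 2) * rpsi l' (2^j' * ((real_of_int k + y) / 2^j) - real_of_int k') = 2 powr (real j' / 2) * a * y + 2 powr (real j' / 2) * b"
      by (simp add: algebra_simps)
  qed
  finally show ?thesis by simp
qed

lemma ip_Inr_Inr_eq:
  "L2_inner (wav_system (Inr (j, k, l))) (wav_system (Inr (j, k', l'))) = (if k = k' \<and> (l = 1) = (l' = 1) then 1 else 0)"
proof -
  have arg: "2^j * ((real_of_int k + y) / 2^j) - real_of_int k' = y + real_of_int (k - k')" for y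
    by (simp add: field_simps)
  have "L2_inner (wav_system (Inr (j, k, l))) (wav_system (Inr (j, k', l'))) =
     2 powr (real j / 2) / 2^j * (LINT y|lborel. rpsi l y * (2 powr (real j / 2) * rpsi l' (2^j * ((real_of_int k + y) / 2^j) - real_of_int k')))"
    unfolding L2_inner_def wav_Inr by (rule subst_Inr)
  also have "\<dots> = 2 powr (real j / 2) / 2^j * (LINT y|lborel. rpsi l y * (2 powr (real j / 2) * rpsi l' (y + real_of_int (k - k'))))"
    by (simp only: arg)
  also have "\<dots> = (if k = k' \<and> (l = 1) = (l' = 1) then 1 else 0)"
  proof (cases "k = k'")
    case True
    have pp: "2 powr (real j / 2) * 2 powr (real j / 2) = (2::real)^j"
      by (simp add: powr_add[symmetric] powr_realpow)
    have "(LINT y|lborel. rpsi l y * (2 powr (real j / 2) * rpsi l' (y + real_of_int (k - k')))) =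
        2 powr (real j / 2) * (LINT y|lborel. rpsi l y * rpsi l' y)"
    proof -
      have *: "\<And>y. rpsi l y * (2 powr (real j / 2) * rpsi l' y) = 2 powr (real j / 2) * (rpsi l y * rpsi l' y)"
        by simp
      have "(LINT y|lborel. rpsi l y * (2 powr (real j / 2) * rpsi l' (y + real_of_int (k - k')))) =
          (LINT y|lborel. rpsi l y * (2 powr (real j / 2) * rpsi l' y))" using True by simp
      also have "\<dots> = (LINT y|lborel. 2 powr (real j / 2) * (rpsi l y * rpsi l' y))" by (simp only: *)
      also have "\<dots> = 2 powr (real j / 2) * (LINT y|lborel. rpsi l y * rpsi l' y)" by (rule integral_mult_right_zero)
      finally show ?thesis .
    qed
    then show ?thesis using True pp by (simp add: K_rpsi_rpsi)
  next
    case False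
    have z: "rpsi l' (y + real_of_int (k - k')) = 0" if "0 < y" "y < 1" for y
    proof (rule rpsi_out)
      have "k - k' \<le> -1 \<or> 1 \<le> k - k'" using False by linarith
      then have "real_of_int (k - k') \<le> -1 \<or> 1 \<le> real_of_int (k - k')" by linarith
      then show "y + real_of_int (k - k') < 0 \<or> 1 < y + real_of_int (k - k')" using that by linarith
    qed
    have "(LINT y|lborel. rpsi l y * (2 powr (real j / 2) * rpsi l' (y + real_of_int (k - k')))) = 0"
      by (rule K_rpsi_aff[of _ 0 0]) (use z in auto)
    then show ?thesis using False by simp
  qed
  finally show ?thesis .
qed

lemma ip_Inl_Inl:
  "L2_inner (wav_system (Inl (l, k))) (wav_system (Inl (l', k'))) = (if k = k' \<and> (l = 1) = (l' = 1) then 1 else 0)"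
proof -
  have "L2_inner (wav_system (Inl (l, k))) (wav_system (Inl (l', k'))) =
      (LINT y|lborel. rphi l y * rphi l' (real_of_int k + y - real_of_int k'))"
    unfolding L2_inner_def wav_Inl by (rule subst_Inl)
  also have "\<dots> = (if k = k' \<and> (l = 1) = (l' = 1) then 1 else 0)"
  proof (cases "k = k'")
    case False
    have z: "rphi l' (real_of_int k + y - real_of_int k') = 0" if "0 < y" "y < 1" for y
    proof (rule rphi_out)
      have "k - k' \<le> -1 \<or> 1 \<le> k - k'" using False by linarith
      then have "real_of_int k - real_of_int k' \<le> -1 \<or> 1 \<le> real_of_int k - real_of_int k'" by linarith
      then show "real_of_int k + y - real_of_int k' < 0 \<or> 1 < real_of_int k + y - real_of_int k'" using that by linarith
    qed
    have "(LINT y|lborel. rphi l y * rphi l' (real_of_int k + y - real_of_int k')) = (if l = 1 then 0/2 + 0 else sqrt 3 * 0 / 6)"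
      by (rule K_rphi_aff) (use z in auto)
    then show ?thesis using False by simp
  next
    case True
    show ?thesis
    proof (cases "l' = 1")
      case l1: True
      have "(LINT y|lborel. rphi l y * rphi l' (real_of_int k + y - real_of_int k')) = (if l = 1 then 0/2 + 1 else sqrt 3 * 0 / 6)"
        by (rule K_rphi_aff) (use True l1 in \<open>auto simp: rphi_def\<close>)
      then show ?thesis using True l1 by simp
    next
      case l2: False
      have "(LINT y|lborel. rphi l y * rphi l' (real_of_int k + y - real_of_int k')) = (if l = 1 then (2 * sqrt 3)/2 + (- sqrt 3) else sqrt 3 * (2 * sqrt 3) / 6)"
        by (rule K_rphi_aff) (use True in \<open>auto simp: rphi2[OF l2] algebra_simps\<close>)
      then show ?thesis using True l2 by simp
    qed
  qed
  finally show ?thesis .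
qed




lemma wav_measurable[measurable]: "wav_system i \<in> borel_measurable lborel"
proof (cases i)
  case (Inl a)
  then obtain l k where "i = Inl (l, k)" by (cases a) auto
  then show ?thesis by (simp add: wav_Inl[abs_def])
next
  case (Inr b)
  then obtain j k l where "i = Inr (j, k, l)" by (cases b) auto
  then show ?thesis by (simp add: wav_Inr[abs_def])
qed

lemma wav_index_cases:
  assumes "i \<in> wav_index"
  obtains l k where "i = Inl (l, k)" "l \<in> {1,2}" | j k l where "i = Inr (j, k, l)" "l \<in> {1,2}"
  using assms unfolding wav_index_def by blast

lemma l12_eq: "l \<in> {1,2} \<Longrightarrow> l' \<in> {1::nat,2} \<Longrightarrow> ((l = 1) = (l' = 1)) = (l = l')"
  by auto

lemma ortho:
  assumes "i \<in> wav_index" "i' \<in> wav_index"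
  shows "L2_inner (wav_system i) (wav_system i') = (if i = i' then 1 else 0)"
proof -
  from assms(1) show ?thesis
  proof (cases rule: wav_index_cases)
    case (1 l k) note i = this
    from assms(2) show ?thesis
    proof (cases rule: wav_index_cases)
      case (1 l' k')
      then show ?thesis using i ip_Inl_Inl[of l k l' k'] l12_eq[of l l'] by auto
    next
      case (2 j' k' l')
      then show ?thesis using i ip_Inr_Inl[of j' k' l' l k] L2_inner_sym by auto
    qed
  next
    case (2 j k l) note i = this
    from assms(2) show ?thesis
    proof (cases rule: wav_index_cases)
      case (1 l' k')
      then show ?thesis using i ip_Inr_Inl[of j k l l' k'] by auto
    next
      case (2 j' k' l') note i' = this
      consider (lt) "j' < j" | (gt) "j < j'" | (eq) "j = j'" by linarith
      then show ?thesis
      proof cases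
        case lt
        then show ?thesis using i i' ip_Inr_Inr_lt[of j' j k l k' l'] by auto
      next
        case gt
        then show ?thesis using i i' ip_Inr_Inr_lt[of j j' k' l' k l] L2_inner_sym by auto
      next
        case eq
        then show ?thesis using i i' ip_Inr_Inr_eq[of j k l k' l'] l12_eq[of l l'] by auto
      qed
    qed
  qed
qed

lemma wav_sqi:
  assumes "i \<in> wav_index"
  shows "square_integrable (wav_system i)"
proof -
  have "L2_inner (wav_system i) (wav_system i) = 1" using ortho[OF assms assms] by simp
  then have "integrable lborel (\<lambda>x. wav_system i x * wav_system i x)"
    unfolding L2_inner_def using not_integrable_integral_eq by fastforce
  then show ?thesis unfolding square_integrable_def by (simp add: power2_eq_square)
qed




definition inspan :: "(real \<Rightarrow> real) \<Rightarrow> bool" where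
  "inspan g \<longleftrightarrow> (\<exists>F c. finite F \<and> F \<subseteq> wav_index \<and> (AE x in lborel. g x = (\<Sum>i\<in>F. c i * wav_system i x)))"

lemma inspan_elem: "i \<in> wav_index \<Longrightarrow> inspan (wav_system i)"
  unfolding inspan_def by (intro exI[of _ "{i}"] exI[of _ "\<lambda>_. 1"]) auto

lemma inspan_zero: "inspan (\<lambda>x. 0)"
  unfolding inspan_def by (intro exI[of _ "{}"]) auto

lemma sum_restrict_union:
  assumes "finite F" "finite G"
  shows "(\<Sum>i\<in>F \<union> G. (if i \<in> F then a i else 0)) = (\<Sum>i\<in>F. (a i :: real))"
proof -
  have "(\<Sum>i\<in>F \<union> G. (if i \<in> F then a i else 0)) = (\<Sum>i\<in>F. (if i \<in> F then a i else 0))"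
    by (rule sum.mono_neutral_right) (use assms in auto)
  then show ?thesis by simp
qed

lemma inspan_add:
  assumes "inspan f" "inspan g"
  shows "inspan (\<lambda>x. f x + g x)"
proof -
  obtain F c where F: "finite F" "F \<subseteq> wav_index" "AE x in lborel. f x = (\<Sum>i\<in>F. c i * wav_system i x)"
    using assms(1) unfolding inspan_def by blast
  obtain G d where G: "finite G" "G \<subseteq> wav_index" "AE x in lborel. g x = (\<Sum>i\<in>G. d i * wav_system i x)"
    using assms(2) unfolding inspan_def by blast
  define e where "e i = (if i \<in> F then c i else 0) + (if i \<in> G then d i else 0)" for i
  have "AE x in lborel. f x + g x = (\<Sum>i\<in>F \<union> G. e i * wav_system i x)"
    using F(3) G(3)
  proof eventually_elim
    case (elim x)
    have *: "\<And>i. e i * wav_system i x = (if i \<in> F then c i * wav_system i x else 0) + (if i \<in> G then d i * wav_system i x else 0)"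
      unfolding e_def by (auto simp: distrib_right)
    have "(\<Sum>i\<in>F \<union> G. e i * wav_system i x) = (\<Sum>i\<in>F \<union> G. (if i \<in> F then c i * wav_system i x else 0)) + (\<Sum>i\<in>F \<union> G. (if i \<in> G then d i * wav_system i x else 0))"
      by (simp only: * sum.distrib)
    also have "\<dots> = (\<Sum>i\<in>F. c i * wav_system i x) + (\<Sum>i\<in>G. d i * wav_system i x)"
      using sum_restrict_union[OF F(1) G(1)] sum_restrict_union[OF G(1) F(1)] by (simp add: Un_commute)
    finally show ?case using elim by simp
  qed
  then show ?thesis unfolding inspan_def using F G by (intro exI[of _ "F \<union> G"] exI[of _ e]) auto
qed

lemma inspan_scale:
  assumes "inspan f"
  shows "inspan (\<lambda>x. a * f x)"
proof -
  obtain F c where F: "finite F" "F \<subseteq> wav_index" "AE x in lborel. f x = (\<Sum>i\<in>F. c i * wav_system i x)"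
    using assms(1) unfolding inspan_def by blast
  have "AE x in lborel. a * f x = (\<Sum>i\<in>F. (a * c i) * wav_system i x)"
    using F(3) by eventually_elim (simp add: sum_distrib_left mult.assoc)
  then show ?thesis unfolding inspan_def using F by (intro exI[of _ F] exI[of _ "\<lambda>i. a * c i"]) auto
qed

lemma inspan_AE:
  assumes "inspan f" "AE x in lborel. g x = f x"
  shows "inspan g"
proof -
  obtain F c where F: "finite F" "F \<subseteq> wav_index" "AE x in lborel. f x = (\<Sum>i\<in>F. c i * wav_system i x)"
    using assms(1) unfolding inspan_def by blast
  have "AE x in lborel. g x = (\<Sum>i\<in>F. c i * wav_system i x)"
    using F(3) assms(2) by eventually_elim simp
  then show ?thesis unfolding inspan_def using F by blast
qed

lemma sqi_add:
  assumes "square_integrable f" "square_integrable g"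
  shows "square_integrable (\<lambda>x. f x + g x)"
proof -
  have m: "f \<in> borel_measurable lborel" "g \<in> borel_measurable lborel"
    and i: "integrable lborel (\<lambda>x. (f x)^2)" "integrable lborel (\<lambda>x. (g x)^2)"
    using assms unfolding square_integrable_def by auto
  note [measurable] = m
  have I: "integrable lborel (\<lambda>x. 2 * (f x)^2 + 2 * (g x)^2)" using i by auto
  have N: "norm ((f x + g x)^2) \<le> norm (2 * (f x)^2 + 2 * (g x)^2)" for x
  proof -
    have "0 \<le> (f x - g x)^2" by simp
    then have h: "(f x + g x)^2 \<le> 2 * (f x)^2 + 2 * (g x)^2" by (simp add: power2_eq_square algebra_simps)
    have "0 \<le> 2 * (f x)^2 + 2 * (g x)^2" by simp
    then show ?thesis using h by simp
  qed
  have "integrable lborel (\<lambda>x. (f x + g x)^2)"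
  proof (rule Bochner_Integration.integrable_bound[OF I])
    show "(\<lambda>x. (f x + g x)^2) \<in> borel_measurable lborel" by measurable
    show "AE x in lborel. norm ((f x + g x)^2) \<le> norm (2 * (f x)^2 + 2 * (g x)^2)" using N by auto
  qed
  then show ?thesis unfolding square_integrable_def using m by auto
qed

lemma sqi_scale:
  assumes "square_integrable f"
  shows "square_integrable (\<lambda>x. a * f x)"
proof -
  have m[measurable]: "f \<in> borel_measurable lborel" using assms unfolding square_integrable_def by auto
  have "(\<lambda>x. a * f x) \<in> borel_measurable lborel" by measurable
  then show ?thesis using assms unfolding square_integrable_def by (simp add: power_mult_distrib)
qed

lemma sqi_diff:
  assumes "square_integrable f" "square_integrable g"
  shows "square_integrable (\<lambda>x. f x - g x)"
  using sqi_add[OF assms(1) sqi_scale[OF assms(2), of "-1"]] by simp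

lemma sqi_zero: "square_integrable (\<lambda>x. 0)"
  unfolding square_integrable_def by simp

lemma sqi_int: "square_integrable f \<Longrightarrow> integrable lborel (\<lambda>x. (f x)^2)"
  unfolding square_integrable_def by auto

lemma L2tri:
  assumes "square_integrable u" "square_integrable v"
  shows "(LINT x|lborel. (u x + v x)^2) \<le> 2 * (LINT x|lborel. (u x)^2) + 2 * (LINT x|lborel. (v x)^2)"
proof -
  have "(LINT x|lborel. (u x + v x)^2) \<le> (LINT x|lborel. 2 * (u x)^2 + 2 * (v x)^2)"
  proof (rule integral_mono)
    show "integrable lborel (\<lambda>x. (u x + v x)\<^sup>2)" using sqi_int[OF sqi_add[OF assms]] .
    show "integrable lborel (\<lambda>x. 2 * (u x)\<^sup>2 + 2 * (v x)\<^sup>2)" using sqi_int[OF assms(1)] sqi_int[OF assms(2)] by auto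
    fix x
    have "0 \<le> (u x - v x)^2" by simp
    then show "(u x + v x)\<^sup>2 \<le> 2 * (u x)\<^sup>2 + 2 * (v x)\<^sup>2" by (simp add: power2_eq_square algebra_simps)
  qed
  also have "\<dots> = 2 * (LINT x|lborel. (u x)^2) + 2 * (LINT x|lborel. (v x)^2)"
    using sqi_int[OF assms(1)] sqi_int[OF assms(2)] by simp
  finally show ?thesis .
qed

definition approx :: "(real \<Rightarrow> real) \<Rightarrow> bool" where
  "approx f \<longleftrightarrow> square_integrable f \<and>
     (\<forall>e>0. \<exists>g. inspan g \<and> square_integrable g \<and> (LINT x|lborel. (f x - g x)^2) < e)"

lemma approx_inspan: "inspan g \<Longrightarrow> square_integrable g \<Longrightarrow> approx g"
  unfolding approx_def by (auto intro!: exI[of _ g])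

lemma approx_limit:
  assumes f: "square_integrable f" and h: "\<And>e. e > 0 \<Longrightarrow> \<exists>h. approx h \<and> (LINT x|lborel. (f x - h x)^2) < e"
  shows "approx f"
  unfolding approx_def
proof (intro conjI f allI impI)
  fix e :: real assume e: "e > 0"
  obtain h where h1: "approx h" and h2: "(LINT x|lborel. (f x - h x)^2) < e/4" using h[of "e/4"] e by auto
  obtain g where g: "inspan g" "square_integrable g" and g2: "(LINT x|lborel. (h x - g x)^2) < e/4"
    using h1 e unfolding approx_def by (meson divide_pos_pos zero_less_numeral)
  have sh: "square_integrable h" using h1 unfolding approx_def by auto
  have "(LINT x|lborel. (f x - g x)^2) = (LINT x|lborel. ((f x - h x) + (h x - g x))^2)" by simp
  also have "\<dots> \<le> 2 * (LINT x|lborel. (f x - h x)^2) + 2 * (LINT x|lborel. (h x - g x)^2)"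
    by (rule L2tri) (use sqi_diff f sh g in auto)
  also have "\<dots> < e" using h2 g2 by simp
  finally show "\<exists>g. inspan g \<and> square_integrable g \<and> (LINT x|lborel. (f x - g x)^2) < e" using g by blast
qed

lemma approx_add:
  assumes "approx f1" "approx f2"
  shows "approx (\<lambda>x. f1 x + f2 x)"
  unfolding approx_def
proof (intro conjI allI impI)
  have s1: "square_integrable f1" and s2: "square_integrable f2" using assms unfolding approx_def by auto
  then show "square_integrable (\<lambda>x. f1 x + f2 x)" by (rule sqi_add)
  fix e :: real assume e: "e > 0"
  obtain g1 where g1: "inspan g1" "square_integrable g1" "(LINT x|lborel. (f1 x - g1 x)^2) < e/4"
    using assms(1) e unfolding approx_def by (meson divide_pos_pos zero_less_numeral)
  obtain g2 where g2: "inspan g2" "square_integrable g2" "(LINT x|lborel. (f2 x - g2 x)^2) < e/4"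
    using assms(2) e unfolding approx_def by (meson divide_pos_pos zero_less_numeral)
  have "(LINT x|lborel. ((f1 x + f2 x) - (g1 x + g2 x))^2) = (LINT x|lborel. ((f1 x - g1 x) + (f2 x - g2 x))^2)"
    by (simp add: algebra_simps)
  also have "\<dots> \<le> 2 * (LINT x|lborel. (f1 x - g1 x)^2) + 2 * (LINT x|lborel. (f2 x - g2 x)^2)"
    by (rule L2tri) (use sqi_diff s1 s2 g1 g2 in auto)
  also have "\<dots> < e" using g1 g2 by simp
  finally show "\<exists>g. inspan g \<and> square_integrable g \<and> (LINT x|lborel. (f1 x + f2 x - g x)^2) < e"
    using g1 g2 by (intro exI[of _ "\<lambda>x. g1 x + g2 x"]) (auto intro: inspan_add sqi_add)
qed

lemma approx_scale:
  assumes "approx f"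
  shows "approx (\<lambda>x. a * f x)"
  unfolding approx_def
proof (intro conjI allI impI)
  have s: "square_integrable f" using assms unfolding approx_def by auto
  then show "square_integrable (\<lambda>x. a * f x)" by (rule sqi_scale)
  fix e :: real assume e: "e > 0"
  have ep: "e / (a^2 + 1) > 0" using e by (simp add: add_nonneg_pos)
  obtain g where g: "inspan g" "square_integrable g" "(LINT x|lborel. (f x - g x)^2) < e / (a^2 + 1)"
    using assms ep unfolding approx_def by blast
  have "(LINT x|lborel. (a * f x - a * g x)^2) = a^2 * (LINT x|lborel. (f x - g x)^2)"
  proof -
    have *: "\<And>x. (a * f x - a * g x)^2 = a^2 * (f x - g x)^2" by (simp add: power2_eq_square algebra_simps)
    show ?thesis by (simp only: *) (rule integral_mult_right_zero)
  qed
  also have "\<dots> \<le> (a^2 + 1) * (LINT x|lborel. (f x - g x)^2)"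
    by (rule mult_right_mono) (auto intro: integral_nonneg_AE)
  also have "\<dots> < (a^2 + 1) * (e / (a^2 + 1))"
    by (rule mult_strict_left_mono) (use g in \<open>auto simp: add_nonneg_pos\<close>)
  also have "\<dots> = e"
  proof -
    have "a^2 + 1 > 0" using zero_le_power2[of a] by linarith
    then show ?thesis by simp
  qed
  finally show "\<exists>g. inspan g \<and> square_integrable g \<and> (LINT x|lborel. (a * f x - g x)^2) < e"
    using g by (intro exI[of _ "\<lambda>x. a * g x"]) (auto intro: inspan_scale sqi_scale)
qed

lemma approx_zero: "approx (\<lambda>x. 0)"
  by (rule approx_inspan[OF inspan_zero sqi_zero])

lemma approx_sum:
  assumes "finite Y" "\<And>y. y \<in> Y \<Longrightarrow> approx (f y)"
  shows "approx (\<lambda>x. \<Sum>y\<in>Y. f y x)"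
  using assms
proof (induction Y rule: finite_induct)
  case empty
  then show ?case using approx_zero by simp
next
  case (insert y Y)
  then have "approx (\<lambda>x. f y x + (\<Sum>y\<in>Y. f y x))" by (intro approx_add) auto
  then show ?case using insert by simp
qed




definition Cf :: "nat \<Rightarrow> int \<Rightarrow> real \<Rightarrow> real" where
  "Cf n k x = (if 0 \<le> 2^n*x - real_of_int k \<and> 2^n*x - real_of_int k \<le> 1 then 1 else 0)"
definition Lf :: "nat \<Rightarrow> int \<Rightarrow> real \<Rightarrow> real" where
  "Lf n k x = (if 0 \<le> 2^n*x - real_of_int k \<and> 2^n*x - real_of_int k \<le> 1 then 2^n*x - real_of_int k else 0)"

definition cC :: "real \<Rightarrow> real" where "cC y = (if 0 \<le> y \<and> y \<le> 1 then 1 else 0)"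
definition cL :: "real \<Rightarrow> real" where "cL y = (if 0 \<le> y \<and> y \<le> 1 then y else 0)"

lemma Cf_cC: "Cf n k x = cC (2^n*x - real_of_int k)" by (simp add: Cf_def cC_def)
lemma Lf_cL: "Lf n k x = cL (2^n*x - real_of_int k)" by (simp add: Lf_def cL_def)

lemma Cf_even: "Cf (Suc n) (2*k) x = cC (2 * (2^n*x - real_of_int k))"
proof -
  have "2^Suc n * x - real_of_int (2*k) = 2 * (2^n*x - real_of_int k)" by (simp add: algebra_simps)
  then show ?thesis by (simp only: Cf_cC)
qed
lemma Lf_even: "Lf (Suc n) (2*k) x = cL (2 * (2^n*x - real_of_int k))"
proof -
  have "2^Suc n * x - real_of_int (2*k) = 2 * (2^n*x - real_of_int k)" by (simp add: algebra_simps)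
  then show ?thesis by (simp only: Lf_cL)
qed
lemma Cf_odd: "Cf (Suc n) (2*k+1) x = cC (2 * (2^n*x - real_of_int k) - 1)"
proof -
  have "2^Suc n * x - real_of_int (2*k+1) = 2 * (2^n*x - real_of_int k) - 1" by (simp add: algebra_simps)
  then show ?thesis by (simp only: Cf_cC)
qed
lemma Lf_odd: "Lf (Suc n) (2*k+1) x = cL (2 * (2^n*x - real_of_int k) - 1)"
proof -
  have "2^Suc n * x - real_of_int (2*k+1) = 2 * (2^n*x - real_of_int k) - 1" by (simp add: algebra_simps)
  then show ?thesis by (simp only: Lf_cL)
qed

lemma local_id:
  assumes "y \<noteq> 0" "y \<noteq> 1/2" "y \<noteq> 1"
  shows "cC (2*y) = (5 * cC y - 6 * cL y + rpsi 2 y) / 4"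
    and "cL (2*y) = (2 * cC y - 2 * cL y + rpsi 2 y - rpsi 1 y / sqrt 3) / 4"
    and "cC (2*y - 1) = (6 * cL y - rpsi 2 y - cC y) / 4"
    and "cL (2*y - 1) = (4 * cL y - cC y + rpsi 1 y / sqrt 3) / 4"
proof -
  have r1: "rpsi 1 y = pw 1 y" and r2: "rpsi 2 y = pw 2 y" and r1': "rpsi (Suc 0) y = pw 1 y" using rpsi_eq assms by auto
  consider "y < 0" | "0 < y" "y < 1/2" | "1/2 < y" "y < 1" | "1 < y" using assms by linarith
  then have "cC (2*y) = (5 * cC y - 6 * cL y + rpsi 2 y) / 4 \<and>
    cL (2*y) = (2 * cC y - 2 * cL y + rpsi 2 y - rpsi 1 y / sqrt 3) / 4 \<and>
    cC (2*y - 1) = (6 * cL y - rpsi 2 y - cC y) / 4 \<and>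
    cL (2*y - 1) = (4 * cL y - cC y + rpsi 1 y / sqrt 3) / 4"
    by cases (auto simp: r1 r1' r2 pw_def cC_def cL_def field_simps)
  then show "cC (2*y) = (5 * cC y - 6 * cL y + rpsi 2 y) / 4"
    and "cL (2*y) = (2 * cC y - 2 * cL y + rpsi 2 y - rpsi 1 y / sqrt 3) / 4"
    and "cC (2*y - 1) = (6 * cL y - rpsi 2 y - cC y) / 4"
    and "cL (2*y - 1) = (4 * cL y - cC y + rpsi 1 y / sqrt 3) / 4" by auto
qed

lemma AE_three: "AE x in lborel. x \<noteq> a \<and> x \<noteq> b \<and> x \<noteq> (c::real)"
  using AE_lborel_singleton[of a] AE_lborel_singleton[of b] AE_lborel_singleton[of c]
  by eventually_elim auto

definition comb :: "real \<Rightarrow> real \<Rightarrow> real \<Rightarrow> real \<Rightarrow> nat \<Rightarrow> int \<Rightarrow> real \<Rightarrow> real" where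
  "comb a1 a2 a3 a4 n k x = a1 * Cf n k x + a2 * Lf n k x + a3 * wav_system (Inr (n, k, 1)) x + a4 * wav_system (Inr (n, k, 2)) x"

lemma inspan_comb:
  assumes "inspan (Cf n k)" "inspan (Lf n k)"
  shows "inspan (comb a1 a2 a3 a4 n k)"
proof -
  have e1: "inspan (wav_system (Inr (n, k, 1)))" by (rule inspan_elem) (simp add: wav_index_def)
  have e2: "inspan (wav_system (Inr (n, k, 2)))" by (rule inspan_elem) (simp add: wav_index_def)
  show ?thesis unfolding comb_def[abs_def]
    by (intro inspan_add inspan_scale assms e1 e2)
qed

lemma AE_local:
  fixes n :: nat and k :: int
  defines "sc \<equiv> 2 powr (real n / 2)"
  shows "AE x in lborel. Cf (Suc n) (2*k) x = comb (5/4) (-6/4) 0 (1/(4 * sc)) n k x \<and>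
    Lf (Suc n) (2*k) x = comb (1/2) (-1/2) (-1/(4 * sc * sqrt 3)) (1/(4 * sc)) n k x \<and>
    Cf (Suc n) (2*k+1) x = comb (-1/4) (6/4) 0 (-1/(4 * sc)) n k x \<and>
    Lf (Suc n) (2*k+1) x = comb (-1/4) 1 (1/(4 * sc * sqrt 3)) 0 n k x"
  using AE_three[of "real_of_int k / 2^n" "(real_of_int k + 1/2) / 2^n" "(real_of_int k + 1) / 2^n"]
proof eventually_elim
  case (elim x)
  define y where "y = 2^n*x - real_of_int k"
  have y0: "y \<noteq> 0" using elim unfolding y_def by (auto simp: field_simps)
  have y1: "y \<noteq> 1/2" using elim unfolding y_def by (auto simp: field_simps)
  have y2: "y \<noteq> 1" using elim unfolding y_def by (auto simp: field_simps)
  have sp: "sc > 0" unfolding sc_def by simp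
  have w1: "wav_system (Inr (n, k, 1)) x = sc * rpsi 1 y" unfolding wav_Inr y_def sc_def by simp
  have w2: "wav_system (Inr (n, k, 2)) x = sc * rpsi 2 y" unfolding wav_Inr y_def sc_def by simp
  note L = local_id[OF y0 y1 y2]
  have c: "Cf n k x = cC y" "Lf n k x = cL y" unfolding y_def by (simp_all only: Cf_cC Lf_cL)
  show ?case
    unfolding Cf_even Lf_even Cf_odd Lf_odd y_def[symmetric] comb_def c w1 w2 L
    using sp by (simp add: field_simps)
qed

lemma dyadic_inspan: "inspan (Cf n k) \<and> inspan (Lf n k)"
proof (induction n arbitrary: k)
  case 0
  have e1: "inspan (wav_system (Inl (1, k)))" by (rule inspan_elem) (simp add: wav_index_def)
  have e2: "inspan (wav_system (Inl (2, k)))" by (rule inspan_elem) (simp add: wav_index_def)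
  have c: "Cf 0 k x = wav_system (Inl (1, k)) x" for x
    by (simp add: Cf_def wav_Inl rphi_def indicator_def)
  have l: "Lf 0 k x = 1/2 * (1/sqrt 3 * wav_system (Inl (2, k)) x) + 1/2 * wav_system (Inl (1, k)) x" for x
    by (simp add: Lf_def wav_Inl rphi_def indicator_def field_simps)
  have "inspan (\<lambda>x. 1/2 * (1/sqrt 3 * wav_system (Inl (2, k)) x) + 1/2 * wav_system (Inl (1, k)) x)"
    by (intro inspan_add inspan_scale e1 e2)
  then show ?case using e1 c l by (simp add: fun_eq_iff[symmetric] c[abs_def] l[abs_def])
next
  case (Suc n)
  obtain k0 where "k = 2*k0 \<or> k = 2*k0 + 1" by (metis dvd_div_mult_self even_iff_mod_2_eq_zero mult.commute odd_two_times_div_two_succ)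
  moreover note A = AE_local[of n k0, unfolded AE_conj_iff]
  moreover have I: "inspan (comb a1 a2 a3 a4 n k0)" for a1 a2 a3 a4 using Suc.IH by (intro inspan_comb) auto
  ultimately show ?case
    using inspan_AE[OF I conjunct1[OF A]] inspan_AE[OF I conjunct1[OF conjunct2[OF A]]] inspan_AE[OF I conjunct1[OF conjunct2[OF conjunct2[OF A]]]] inspan_AE[OF I conjunct2[OF conjunct2[OF conjunct2[OF A]]]] by auto
qed




definition Dy :: "nat \<Rightarrow> int \<Rightarrow> real set" where
  "Dy n k = {real_of_int k / 2^n ..< (real_of_int k + 1) / 2^n}"

lemma mem_Dy: "x \<in> Dy n k \<longleftrightarrow> k = \<lfloor>2^n * x\<rfloor>"
proof -
  have "x \<in> Dy n k \<longleftrightarrow> real_of_int k \<le> 2^n * x \<and> 2^n * x < real_of_int k + 1"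
    unfolding Dy_def by (auto simp: field_simps)
  also have "\<dots> \<longleftrightarrow> \<lfloor>2^n * x\<rfloor> = k" by (simp add: floor_eq_iff)
  finally show ?thesis by auto
qed

lemma Dy_sets[measurable]: "Dy n k \<in> sets borel"
  unfolding Dy_def by simp

lemma Dy_emeasure: "emeasure lborel (Dy n k) < \<infinity>"
  unfolding Dy_def by (subst emeasure_lborel_Ico) (auto simp: field_simps)

lemma sqi_indicator:
  assumes "A \<in> sets lborel" "emeasure lborel A < \<infinity>"
  shows "square_integrable (indicator A :: real \<Rightarrow> real)"
proof -
  have "(\<lambda>x. (indicator A x :: real)^2) = indicator A" by (auto simp: indicator_def fun_eq_iff)
  moreover have "integrable lborel (indicator A :: real \<Rightarrow> real)"
    using assms by (simp add: integrable_indicator_iff)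
  ultimately show ?thesis unfolding square_integrable_def using assms(1) by simp
qed

lemma approx_Dy: "approx (indicator (Dy n k))"
proof (rule approx_inspan)
  show "square_integrable (indicator (Dy n k))" by (rule sqi_indicator[OF _ Dy_emeasure]) simp
  have "AE x in lborel. indicator (Dy n k) x = Cf n k x"
    using AE_lborel_singleton[of "(real_of_int k + 1) / 2^n"]
  proof eventually_elim
    case (elim x)
    then have "2^n * x - real_of_int k \<noteq> 1" by (auto simp: field_simps)
    then show ?case unfolding Dy_def Cf_def indicator_def by (auto simp: field_simps)
  qed
  then show "inspan (indicator (Dy n k))" using dyadic_inspan inspan_AE by blast
qed

definition Kset :: "nat \<Rightarrow> real set \<Rightarrow> int set" where
  "Kset n U = {k. \<bar>k\<bar> \<le> int n * 2^n \<and> Dy n k \<subseteq> U}"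

definition UnD :: "nat \<Rightarrow> real set \<Rightarrow> real set" where
  "UnD n U = (\<Union>k\<in>Kset n U. Dy n k)"

lemma Kset_finite: "finite (Kset n U)"
  by (rule finite_subset[of _ "{- (int n * 2^n) .. int n * 2^n}"]) (auto simp: Kset_def)

lemma UnD_sets[measurable]: "UnD n U \<in> sets borel"
  unfolding UnD_def using Kset_finite by (intro sets.finite_UN) auto

lemma UnD_sub: "UnD n U \<subseteq> U"
  unfolding UnD_def Kset_def by auto

lemma indicator_UnD: "indicator (UnD n U) x = (\<Sum>k\<in>Kset n U. indicator (Dy n k) x :: real)"
proof -
  have "(\<Sum>k\<in>Kset n U. indicator (Dy n k) x :: real) = (\<Sum>k\<in>Kset n U. if \<lfloor>2^n * x\<rfloor> = k then 1 else 0)"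
    by (rule sum.cong) (auto simp: indicator_def mem_Dy)
  also have "\<dots> = (if \<lfloor>2^n * x\<rfloor> \<in> Kset n U then 1 else 0)"
    using Kset_finite by (simp add: sum.delta)
  also have "\<dots> = indicator (UnD n U) x"
    unfolding UnD_def indicator_def using mem_Dy by auto
  finally show ?thesis by simp
qed

lemma approx_UnD: "approx (indicator (UnD n U))"
proof -
  have "approx (\<lambda>x. \<Sum>k\<in>Kset n U. indicator (Dy n k) x)"
    by (rule approx_sum[OF Kset_finite approx_Dy])
  then show ?thesis unfolding indicator_UnD[abs_def] .
qed

lemma UnD_mono: "UnD n U \<subseteq> UnD (Suc n) U"
proof
  fix x assume "x \<in> UnD n U"
  then obtain k where k: "k \<in> Kset n U" "x \<in> Dy n k" unfolding UnD_def by auto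
  define k' where "k' = \<lfloor>2^Suc n * x\<rfloor>"
  have x1: "real_of_int k \<le> 2^n * x" "2^n * x < real_of_int k + 1"
    using k(2) unfolding mem_Dy by linarith+
  have x2: "real_of_int k' \<le> 2 * 2^n * x" "2 * 2^n * x < real_of_int k' + 1"
  proof -
    have "real_of_int k' \<le> 2^Suc n * x" "2^Suc n * x < real_of_int k' + 1" unfolding k'_def by linarith+
    then show "real_of_int k' \<le> 2 * 2^n * x" "2 * 2^n * x < real_of_int k' + 1" by simp_all
  qed
  have "real_of_int (2*k) < real_of_int (k' + 1)" using x1 x2 by simp
  then have b1: "2*k \<le> k'" by linarith
  have "real_of_int k' < real_of_int (2*k + 2)" using x1 x2 by simp
  then have b2: "k' \<le> 2*k+1" by linarith
  have sub: "Dy (Suc n) k' \<subseteq> Dy n k"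
  proof
    fix z assume "z \<in> Dy (Suc n) k'"
    then have "real_of_int k' \<le> 2^Suc n * z" "2^Suc n * z < real_of_int k' + 1" unfolding mem_Dy by linarith+
    then have z: "real_of_int k' \<le> 2 * 2^n * z" "2 * 2^n * z < real_of_int k' + 1" by simp_all
    have "real_of_int (2*k) \<le> real_of_int k'" "real_of_int k' \<le> real_of_int (2*k+1)" using b1 b2 by linarith+
    then have "real_of_int k \<le> 2^n * z" "2^n * z < real_of_int k + 1" using z by simp_all
    then show "z \<in> Dy n k" unfolding mem_Dy by linarith
  qed
  have kb: "\<bar>k\<bar> \<le> int n * 2^n" "Dy n k \<subseteq> U" using k(1) unfolding Kset_def by auto
  have "\<bar>k'\<bar> \<le> int (Suc n) * 2^Suc n"
  proof -
    have p: "(2::int)^n \<ge> 1" by simp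
    have "int (Suc n) * 2^Suc n = 2*(int n * 2^n) + 2 * 2^n" by (simp add: algebra_simps)
    then have "2 * (int n * 2^n) + 1 \<le> int (Suc n) * 2^Suc n" using p by linarith
    then show ?thesis using kb(1) b1 b2 by linarith
  qed
  moreover have "x \<in> Dy (Suc n) k'" unfolding mem_Dy k'_def ..
  ultimately show "x \<in> UnD (Suc n) U" unfolding UnD_def Kset_def using sub kb(2) by blast
qed

lemma UnD_union:
  assumes "open U"
  shows "(\<Union>n. UnD n U) = U"
proof
  show "(\<Union>n. UnD n U) \<subseteq> U" using UnD_sub by blast
  show "U \<subseteq> (\<Union>n. UnD n U)"
  proof
    fix x assume "x \<in> U"
    then obtain r where r: "r > 0" "ball x r \<subseteq> U" using assms open_contains_ball by blast
    obtain n1 where n1: "(1/2::real)^n1 < r" using real_arch_pow_inv[OF r(1), of "1/2"] by auto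
    define n where "n = max n1 (nat \<lceil>\<bar>x\<bar>\<rceil> + 1)"
    have nn: "(1/2::real)^n \<le> (1/2)^n1" unfolding n_def by (rule power_decreasing) auto
    have inv: "1 / 2^n < r" using nn n1 by (simp add: power_divide)
    have nx: "\<bar>x\<bar> + 1 \<le> real n" unfolding n_def by linarith
    define k where "k = \<lfloor>2^n * x\<rfloor>"
    have xk: "x \<in> Dy n k" unfolding mem_Dy k_def ..
    have kk: "real_of_int k \<le> 2^n * x" "2^n * x < real_of_int k + 1" unfolding k_def by linarith+
    have sub: "Dy n k \<subseteq> U"
    proof
      fix z assume "z \<in> Dy n k"
      then have z: "real_of_int k \<le> 2^n * z" "2^n * z < real_of_int k + 1" unfolding mem_Dy by linarith+
      have "\<bar>2^n * z - 2^n * x\<bar> < 1" using z kk by linarith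
      then have "2^n * \<bar>z - x\<bar> < 1" by (simp add: abs_mult flip: right_diff_distrib)
      then have "\<bar>z - x\<bar> < 1 / 2^n" by (simp add: field_simps)
      then have "dist x z < r" using inv by (simp add: dist_real_def abs_minus_commute)
      then show "z \<in> U" using r(2) by auto
    qed
    have p1: "(2::real)^n \<ge> 1" by simp
    have "\<bar>2^n * x\<bar> \<le> 2^n * (real n - 1)" using nx p1 by (simp add: abs_mult mult_left_mono)
    then have "\<bar>real_of_int k\<bar> \<le> 2^n * (real n - 1) + 1" using kk by linarith
    also have "\<dots> \<le> real n * 2^n" using p1 by (simp add: algebra_simps)
    finally have "real_of_int \<bar>k\<bar> \<le> real_of_int (int n * 2^n)" by simp
    then have "\<bar>k\<bar> \<le> int n * 2^n" by (simp only: of_int_le_iff)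
    then show "x \<in> (\<Union>n. UnD n U)" using xk sub unfolding UnD_def Kset_def by blast
  qed
qed

lemma open_small:
  assumes "open U" "emeasure lborel U < \<infinity>" "e > 0"
  shows "\<exists>n. emeasure lborel (U - UnD n U) < ennreal e"
proof -
  have U: "U \<in> sets lborel" using assms(1) by simp
  have T: "(\<lambda>i. emeasure lborel (U - UnD i U)) \<longlonglongrightarrow> emeasure lborel (\<Inter>i. U - UnD i U)"
  proof (rule Lim_emeasure_decseq)
    show "range (\<lambda>i. U - UnD i U) \<subseteq> sets lborel" using U by auto
    show "decseq (\<lambda>i. U - UnD i U)" by (rule decseq_SucI) (use UnD_mono in blast)
    fix i
    have "emeasure lborel (U - UnD i U) \<le> emeasure lborel U" by (rule emeasure_mono) (use U in auto)
    then show "emeasure lborel (U - UnD i U) \<noteq> \<infinity>" using assms(2) by (auto simp: top_unique)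
  qed
  have eq: "(\<Inter>i. U - UnD i U) = {}" using UnD_union[OF assms(1)] by blast
  from T[unfolded eq] have "(\<lambda>i. emeasure lborel (U - UnD i U)) \<longlonglongrightarrow> 0" by (simp only: emeasure_empty)
  moreover have "ennreal e > 0" using assms(3) by simp
  ultimately have "eventually (\<lambda>i. emeasure lborel (U - UnD i U) < ennreal e) sequentially"
    by (rule order_tendstoD(2))
  then show ?thesis using eventually_sequentially by auto
qed




lemma meas_lt:
  assumes "emeasure lborel S < ennreal c"
  shows "measure lborel S < c"
proof -
  have "emeasure lborel S \<noteq> top" using assms by (auto simp: top_unique)
  then have "emeasure lborel S = ennreal (measure lborel S)" by (rule emeasure_eq_ennreal_measure)
  then have "ennreal (measure lborel S) < ennreal c" using assms by simp
  then show ?thesis by (subst (asm) ennreal_less_iff) auto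
qed

lemma approx_indicator:
  assumes A: "A \<in> sets borel" "emeasure lborel A < \<infinity>"
  shows "approx (indicator A)"
proof (rule approx_limit)
  show "square_integrable (indicator A)" using A by (intro sqi_indicator) auto
  fix e :: real assume e: "e > 0"
  obtain U where U: "open U" "A \<subseteq> U" "emeasure lborel (U - A) < e/4"
    using outer_regular_lborel[OF A(1), of "e/4"] e by auto
  have Us: "U \<in> sets borel" using U(1) by simp
  have UAf: "emeasure lborel (U - A) < \<infinity>" using order.strict_trans[OF U(3) ennreal_less_top] by simp
  have "U = A \<union> (U - A)" using U(2) by auto
  then have "emeasure lborel U \<le> emeasure lborel A + emeasure lborel (U - A)"
    using emeasure_subadditive[of A lborel "U - A"] A Us by auto
  also have "\<dots> < \<infinity>" using A(2) UAf by (simp add: ennreal_add_less_top)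
  finally have Uf: "emeasure lborel U < \<infinity>" .
  obtain n where n: "emeasure lborel (U - UnD n U) < ennreal (e/4)" using open_small[OF U(1) Uf, of "e/4"] e by auto
  define B where "B = UnD n U"
  have Bs: "B \<in> sets borel" unfolding B_def by simp
  have BU: "B \<subseteq> U" unfolding B_def by (rule UnD_sub)
  have "emeasure lborel B \<le> emeasure lborel U" by (rule emeasure_mono[OF BU]) (use Us in simp)
  then have Bf: "emeasure lborel B < \<infinity>" using Uf by (rule le_less_trans)
  have UBf: "emeasure lborel (U - B) < \<infinity>" using order.strict_trans[OF n ennreal_less_top] unfolding B_def by simp
  have "(LINT x|lborel. (indicator A x - indicator B x :: real)^2) \<le> (LINT x|lborel. indicator (U - A) x + indicator (U - B) x :: real)"
  proof (rule integral_mono)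
    show "integrable lborel (\<lambda>x. (indicator A x - indicator B x :: real)\<^sup>2)"
      by (rule sqi_int[OF sqi_diff]) (use sqi_indicator A Bs Bf in auto)
    show "integrable lborel (\<lambda>x. indicator (U - A) x + indicator (U - B) x :: real)"
      using UAf UBf Us A Bs by (intro Bochner_Integration.integrable_add) (auto simp: integrable_indicator_iff)
    fix x
    show "(indicator A x - indicator B x :: real)\<^sup>2 \<le> (indicator (U - A) x + indicator (U - B) x :: real)"
      using U(2) BU by (auto simp: indicator_def)
  qed
  also have "\<dots> = measure lborel (U - A) + measure lborel (U - B)"
    using UAf UBf Us A Bs by (subst Bochner_Integration.integral_add) (auto simp: integrable_indicator_iff)
  also have "\<dots> < e/4 + e/4"
    using meas_lt[OF U(3)] meas_lt[OF n] unfolding B_def by (intro add_strict_mono) auto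
  also have "\<dots> < e" using e by simp
  finally show "\<exists>h. approx h \<and> (LINT x|lborel. (indicator A x - h x)^2) < e"
    using approx_UnD[of n U] unfolding B_def by blast
qed

lemma approx_simple:
  fixes s f :: "real \<Rightarrow> real"
  assumes s: "simple_function lborel s" and f: "square_integrable f" and b: "\<And>x. \<bar>s x\<bar> \<le> 2 * \<bar>f x\<bar>"
  shows "approx s"
proof -
  have fm[measurable]: "f \<in> borel_measurable lborel" using f unfolding square_integrable_def by auto
  have fi: "integrable lborel (\<lambda>x. (f x)^2)" using f unfolding square_integrable_def by auto
  have fin: "finite (s ` UNIV)" using simple_functionD(1)[OF s] by simp
  have rep: "s x = (\<Sum>y\<in>s ` UNIV. indicator (s -` {y}) x * y)" for x
    using simple_function_indicator_representation_banach[OF s, of x] by simp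
  have tm0: "approx (\<lambda>x. y * indicator (s -` {y}) x)" for y
  proof (cases "y = 0")
    case True
    then show ?thesis using approx_zero by simp
  next
    case False
    have S: "s -` {y} \<in> sets borel" using simple_functionD(2)[OF s, of "{y}"] by simp
    have "integrable lborel (indicator (s -` {y}) :: real \<Rightarrow> real)"
    proof (rule Bochner_Integration.integrable_bound)
      show "integrable lborel (\<lambda>x. 4 / y^2 * (f x)^2)" using fi by simp
      show "indicator (s -` {y}) \<in> borel_measurable lborel" using S by simp
      show "AE x in lborel. norm (indicator (s -` {y}) x :: real) \<le> norm (4 / y^2 * (f x)^2)"
      proof (rule AE_I2)
        fix x
        show "norm (indicator (s -` {y}) x :: real) \<le> norm (4 / y^2 * (f x)^2)"
        proof (cases "s x = y")
          case True
          have "\<bar>y\<bar> \<le> 2 * \<bar>f x\<bar>" using b[of x] True by simp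
          then have "\<bar>y\<bar>^2 \<le> (2 * \<bar>f x\<bar>)^2" by (rule power_mono) simp
          then have "y^2 \<le> 4 * (f x)^2" by (simp add: power_mult_distrib)
          then have "1 \<le> 4 / y^2 * (f x)^2" using False by (simp add: field_simps)
          then show ?thesis using True by (simp add: indicator_def)
        next
          case False
          then show ?thesis by (simp add: indicator_def)
        qed
      qed
    qed
    then have "emeasure lborel (s -` {y}) < \<infinity>" by (simp add: integrable_indicator_iff)
    then have "approx (indicator (s -` {y}))" using S by (intro approx_indicator) auto
    then show ?thesis by (rule approx_scale)
  qed
  have tm: "approx (\<lambda>x. indicator (s -` {y}) x * y)" for y
  proof -
    have "(\<lambda>x. indicator (s -` {y}) x * y) = (\<lambda>x. y * indicator (s -` {y}) x)" by (rule ext) (rule mult.commute)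
    then show ?thesis using tm0[of y] by simp
  qed
  have ap: "approx (\<lambda>x. \<Sum>y\<in>s ` UNIV. indicator (s -` {y}) x * y)"
    by (rule approx_sum[OF fin tm])
  have eq: "(\<lambda>x. \<Sum>y\<in>s ` UNIV. indicator (s -` {y}) x * y) = s"
    by (rule ext) (rule rep[symmetric])
  show ?thesis using ap unfolding eq .
qed

lemma approx_all:
  assumes f: "square_integrable f"
  shows "approx f"
proof -
  have fm[measurable]: "f \<in> borel_measurable lborel" using f unfolding square_integrable_def by auto
  have fi: "integrable lborel (\<lambda>x. (f x)^2)" using f unfolding square_integrable_def by auto
  obtain F where F: "\<And>i. simple_function lborel (F i)" "\<And>x. (\<lambda>i. F i x) \<longlonglongrightarrow> f x"
    "\<And>i x. dist (F i x) 0 \<le> 2 * dist (f x) 0"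
    using borel_measurable_implies_sequence_metric[OF fm, of 0] by auto
  have Fb: "\<bar>F i x\<bar> \<le> 2 * \<bar>f x\<bar>" for i x using F(3)[of i x] by simp
  have Fm[measurable]: "F i \<in> borel_measurable lborel" for i using F(1) by (rule borel_measurable_simple_function)
  define S where "S i x = (f x - F i x)^2" for i x
  have Sm[measurable]: "S i \<in> borel_measurable lborel" for i unfolding S_def[abs_def] by measurable
  have a1: "(\<lambda>x. 0::real) \<in> borel_measurable lborel" by simp
  have a3: "integrable lborel (\<lambda>x. 9 * (f x)^2)" using fi by simp
  have a4: "AE x in lborel. (\<lambda>i. S i x) \<longlonglongrightarrow> 0"
  proof (rule AE_I2)
    fix x
    have t: "(\<lambda>i. f x - F i x) \<longlonglongrightarrow> f x - f x" by (intro tendsto_intros F(2))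
    have "(\<lambda>i. (f x - F i x)^2) \<longlonglongrightarrow> (f x - f x)^2" by (rule tendsto_power[OF t])
    then show "(\<lambda>i. S i x) \<longlonglongrightarrow> 0" by (simp add: S_def)
  qed
  have a5: "AE x in lborel. norm (S i x) \<le> 9 * (f x)^2" for i
  proof (rule AE_I2)
    fix x
    have "\<bar>f x - F i x\<bar> \<le> 3 * \<bar>f x\<bar>" using Fb[of i x] by linarith
    then have "\<bar>f x - F i x\<bar>^2 \<le> (3 * \<bar>f x\<bar>)^2" by (rule power_mono) simp
    then show "norm (S i x) \<le> 9 * (f x)^2" by (simp add: S_def power_mult_distrib)
  qed
  have lim0: "(\<lambda>i. integral\<^sup>L lborel (S i)) \<longlonglongrightarrow> integral\<^sup>L lborel (\<lambda>x. 0)"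
    using integral_dominated_convergence[OF a1 Sm a3 _ a5] a4 by simp
  have lim: "(\<lambda>i. LINT x|lborel. (f x - F i x)^2) \<longlonglongrightarrow> 0"
    using lim0 by (simp add: S_def[abs_def])
  show ?thesis
  proof (rule approx_limit[OF f])
    fix e :: real assume e: "e > 0"
    from lim have "eventually (\<lambda>i. (LINT x|lborel. (f x - F i x)^2) < e) sequentially"
      using e by (simp add: order_tendstoD(2))
    then obtain i where i: "(LINT x|lborel. (f x - F i x)^2) < e" using eventually_sequentially by auto
    have "approx (F i)" using F(1) f Fb by (rule approx_simple)
    then show "\<exists>h. approx h \<and> (LINT x|lborel. (f x - h x)^2) < e" using i by blast
  qed
qed

theorem mainTheorem2:
  shows "orthonormal_basis_L2 wav_index wav_system"
  unfolding orthonormal_basis_L2_def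
proof (intro conjI ballI allI impI)
  fix i assume "i \<in> wav_index"
  then show "square_integrable (wav_system i)" by (rule wav_sqi)
next
  fix i j assume "i \<in> wav_index" "j \<in> wav_index"
  then show "L2_inner (wav_system i) (wav_system j) = (if i = j then 1 else 0)" by (rule ortho)
next
  fix f :: "real \<Rightarrow> real" and e :: real
  assume f: "square_integrable f" and e: "e > 0"
  obtain g where g: "inspan g" "square_integrable g" "(LINT x|lborel. (f x - g x)^2) < e"
    using approx_all[OF f] e unfolding approx_def by blast
  obtain F c where F: "finite F" "F \<subseteq> wav_index" "AE x in lborel. g x = (\<Sum>i\<in>F. c i * wav_system i x)"
    using g(1) unfolding inspan_def by blast
  have fm[measurable]: "f \<in> borel_measurable lborel" using f unfolding square_integrable_def by auto
  have gm[measurable]: "g \<in> borel_measurable lborel" using g(2) unfolding square_integrable_def by auto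
  have "(LINT x|lborel. (f x - (\<Sum>i\<in>F. c i * wav_system i x))^2) = (LINT x|lborel. (f x - g x)^2)"
  proof (rule integral_cong_AE)
    show "(\<lambda>x. (f x - (\<Sum>i\<in>F. c i * wav_system i x))^2) \<in> borel_measurable lborel" by measurable
    show "(\<lambda>x. (f x - g x)^2) \<in> borel_measurable lborel" by measurable
    show "AE x in lborel. (f x - (\<Sum>i\<in>F. c i * wav_system i x))^2 = (f x - g x)^2"
      using F(3) by eventually_elim simp
  qed
  then have "(LINT x|lborel. (f x - (\<Sum>i\<in>F. c i * wav_system i x))^2) < e" using g(3) by simp
  then show "\<exists>F c. finite F \<and> F \<subseteq> wav_index \<and> (LINT x|lborel. (f x - (\<Sum>i\<in>F. c i * wav_system i x))^2) < e"
    using F by blast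
qed


end
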